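(* In the setting described in the context, for all $\alpha,\beta\in(0,\infty)$ with $\alpha>\beta$ and all $t\ge0$: if $L^{(\alpha)}_{t\infty}>0$ then $L^{(\beta)}_{t\infty}=\infty$, whereas if $L^{(\beta)}_{t\infty}<\infty$ then $L^{(\alpha)}_{t\infty}=0$.
   Context: Let $(\Omega,\mathcal F,\mathbb P)$ be a probability space with a filtration $\{\mathcal F_t\}_{t\ge0}$ satisfying the usual conditions; (in)equalities between random variables hold a.s. A pricing kernel is an $\{\mathcal F_t\}$-adapted càdlàg semimartingale $\{\pi_t\}_{t\ge0}$ with (a) $\pi_t>0$, (b) $\mathbb E[\pi_t]<\infty$ for all $t\ge0$, (c) $\liminf_{t\to\infty}\mathbb E[\pi_t]=0$. Fix such a pricing kernel and set $P_{tT}=\pi_t^{-1}\mathbb E[\pi_T\mid\mathcal F_t]$ for $0\le t<T$. For $\lambda>0$, the tail-Pareto rate $L^{(\lambda)}_{tT}$ is defined by $P_{tT}=\left[1+\lambda^{-1}(T-t)L^{(\lambda)}_{tT}\right]^{-\lambda}$, i.e. $L^{(\lambda)}_{tT}=\lambda(T-t)^{-1}(P_{tT}^{-1/\lambda}-1)$. For a family $\{A_x\}_{x\in\mathbb R^+}$ of $\mathcal F_t$-measurable extended-real random variables, $\limsup_{x\to\infty}A_x:=\operatorname{ess\,inf}_{x}\operatorname{ess\,sup}_{y\ge x}A_y$, with essential supremum/infimum taken among $\mathcal F_t$-measurable random variables. The long tail-Pareto rate is $L^{(\lambda)}_{t\infty}=\limsup_{T\to\infty}L^{(\lambda)}_{tT}$.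 *)

theory Defs
  imports "HOL-Probability.Probability"
begin

definition filtration_usual :: "'a measure \<Rightarrow> (real \<Rightarrow> 'a measure) \<Rightarrow> bool" where
  "filtration_usual M F \<longleftrightarrow>
     (\<forall>t\<ge>0. subalgebra M (F t)) \<and>
     (\<forall>s t. 0 \<le> s \<and> s \<le> t \<longrightarrow> sets (F s) \<subseteq> sets (F t)) \<and>
     (\<forall>t\<ge>0. sets (F t) = (\<Inter>s\<in>{t<..}. sets (F s))) \<and>
     (\<forall>A\<in>null_sets M. A \<in> sets (F 0))"

definition cadlag :: "(real \<Rightarrow> real) \<Rightarrow> bool" where
  "cadlag f \<longleftrightarrow> (\<forall>t\<ge>0. continuous (at_right t) f \<and> (t > 0 \<longrightarrow> (\<exists>l. (f \<longlongrightarrow> l) (at_left t))))"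

text \<open>Pricing kernel (the semimartingale requirement is not formalized).\<close>
definition pricing_kernel :: "'a measure \<Rightarrow> (real \<Rightarrow> 'a measure) \<Rightarrow> (real \<Rightarrow> 'a \<Rightarrow> real) \<Rightarrow> bool" where
  "pricing_kernel M F \<pi> \<longleftrightarrow>
     (\<forall>t\<ge>0. \<pi> t \<in> borel_measurable (F t)) \<and>
     (\<forall>\<omega>\<in>space M. cadlag (\<lambda>t. \<pi> t \<omega>)) \<and>
     (\<forall>t\<ge>0. AE \<omega> in M. \<pi> t \<omega> > 0) \<and>
     (\<forall>t\<ge>0. integrable M (\<pi> t)) \<and>
     Liminf at_top (\<lambda>t. ereal (integral\<^sup>L M (\<pi> t))) = 0"

definition bond_price :: "'a measure \<Rightarrow> (real \<Rightarrow> 'a measure) \<Rightarrow> (real \<Rightarrow> 'a \<Rightarrow> real) \<Rightarrow> real \<Rightarrow> real \<Rightarrow> 'a \<Rightarrow> real" where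
  "bond_price M F \<pi> t T \<omega> = real_cond_exp M (F t) (\<pi> T) \<omega> / \<pi> t \<omega>"

definition tail_pareto_rate :: "'a measure \<Rightarrow> (real \<Rightarrow> 'a measure) \<Rightarrow> (real \<Rightarrow> 'a \<Rightarrow> real) \<Rightarrow> real \<Rightarrow> real \<Rightarrow> real \<Rightarrow> 'a \<Rightarrow> ereal" where
  "tail_pareto_rate M F \<pi> lam t T \<omega> =
     ereal (lam / (T - t) * (bond_price M F \<pi> t T \<omega> powr (-1 / lam) - 1))"

definition is_ess_sup :: "'a measure \<Rightarrow> 'a measure \<Rightarrow> 'i set \<Rightarrow> ('i \<Rightarrow> 'a \<Rightarrow> ereal) \<Rightarrow> ('a \<Rightarrow> ereal) \<Rightarrow> bool" where
  "is_ess_sup M N I A Z \<longleftrightarrow> Z \<in> borel_measurable N \<and> (\<forall>i\<in>I. AE \<omega> in M. A i \<omega> \<le> Z \<omega>) \<and>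
     (\<forall>Z'. Z' \<in> borel_measurable N \<and> (\<forall>i\<in>I. AE \<omega> in M. A i \<omega> \<le> Z' \<omega>) \<longrightarrow> (AE \<omega> in M. Z \<omega> \<le> Z' \<omega>))"

definition is_ess_inf :: "'a measure \<Rightarrow> 'a measure \<Rightarrow> 'i set \<Rightarrow> ('i \<Rightarrow> 'a \<Rightarrow> ereal) \<Rightarrow> ('a \<Rightarrow> ereal) \<Rightarrow> bool" where
  "is_ess_inf M N I A Z \<longleftrightarrow> Z \<in> borel_measurable N \<and> (\<forall>i\<in>I. AE \<omega> in M. Z \<omega> \<le> A i \<omega>) \<and>
     (\<forall>Z'. Z' \<in> borel_measurable N \<and> (\<forall>i\<in>I. AE \<omega> in M. Z' \<omega> \<le> A i \<omega>) \<longrightarrow> (AE \<omega> in M. Z' \<omega> \<le> Z \<omega>))"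

definition ess_sup_rv :: "'a measure \<Rightarrow> 'a measure \<Rightarrow> 'i set \<Rightarrow> ('i \<Rightarrow> 'a \<Rightarrow> ereal) \<Rightarrow> 'a \<Rightarrow> ereal" where
  "ess_sup_rv M N I A = (SOME Z. is_ess_sup M N I A Z)"

definition ess_inf_rv :: "'a measure \<Rightarrow> 'a measure \<Rightarrow> 'i set \<Rightarrow> ('i \<Rightarrow> 'a \<Rightarrow> ereal) \<Rightarrow> 'a \<Rightarrow> ereal" where
  "ess_inf_rv M N I A = (SOME Z. is_ess_inf M N I A Z)"

definition ess_limsup :: "'a measure \<Rightarrow> 'a measure \<Rightarrow> real set \<Rightarrow> (real \<Rightarrow> 'a \<Rightarrow> ereal) \<Rightarrow> 'a \<Rightarrow> ereal" where
  "ess_limsup M N S A = ess_inf_rv M N S (\<lambda>x. ess_sup_rv M N {y\<in>S. x \<le> y} A)"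

text \<open>Long tail-Pareto rate L^(\<lambda>)_{t\<infinity>}; T ranges over (t,\<infinity>), where L_tT is defined.\<close>
definition long_tail_pareto_rate :: "'a measure \<Rightarrow> (real \<Rightarrow> 'a measure) \<Rightarrow> (real \<Rightarrow> 'a \<Rightarrow> real) \<Rightarrow> real \<Rightarrow> real \<Rightarrow> 'a \<Rightarrow> ereal" where
  "long_tail_pareto_rate M F \<pi> lam t =
     ess_limsup M (F t) {t<..} (\<lambda>T. tail_pareto_rate M F \<pi> lam t T)"

end

theory Submission
  imports Defs
begin


definition phi :: "ereal \<Rightarrow> real" where
  "phi x = (if x = \<infinity> then pi/2 else if x = -\<infinity> then -(pi/2) else arctan (real_of_ereal x))"

lemma phi_meas[measurable]: "phi \<in> borel_measurable borel"
  unfolding phi_def by measurable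

lemma phi_bound: "\<bar>phi x\<bar> \<le> pi/2"
  using arctan_bounded[of "real_of_ereal x"] unfolding phi_def by (auto simp: abs_if)

lemma phi_le: "phi x \<le> pi/2"
  using phi_bound[of x] by linarith

lemma phi_strict: "x < y \<Longrightarrow> phi x < phi y"
  using arctan_bounded[of "real_of_ereal x"] arctan_bounded[of "real_of_ereal y"]
  by (cases x; cases y) (auto simp: phi_def arctan_less_iff)

lemma phi_mono: "x \<le> y \<Longrightarrow> phi x \<le> phi y"
  using phi_strict[of x y] by (cases "x = y") (auto simp: less_le)

lemma countable_dominating:
  fixes A :: "'i \<Rightarrow> 'a \<Rightarrow> ereal"
  assumes P: "prob_space M" and sub: "subalgebra M N"
    and meas: "\<And>i. i\<in>I \<Longrightarrow> A i \<in> borel_measurable N"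
  shows "\<exists>J::'i set. countable J \<and> J \<subseteq> I \<and> (\<forall>i\<in>I. AE \<omega> in M. A i \<omega> \<le> (SUP j\<in>J. A j \<omega>))"
proof -
  interpret prob_space M by fact
  define v where "v J = (\<integral>\<omega>. phi (SUP j\<in>J. A j \<omega>) \<partial>M)" for J
  have measJ: "(\<lambda>\<omega>. SUP j\<in>J. A j \<omega>) \<in> borel_measurable N" if "countable J" "J \<subseteq> I" for J
    using that meas by (intro borel_measurable_SUP) auto
  have intJ: "integrable M (\<lambda>\<omega>. phi (SUP j\<in>J. A j \<omega>))" if "countable J" "J \<subseteq> I" for J
  proof (rule integrable_const_bound[where B="pi/2"])
    show "AE x in M. norm (phi (SUP j\<in>J. A j x)) \<le> pi / 2" using phi_bound by auto
    have "(\<lambda>\<omega>. SUP j\<in>J. A j \<omega>) \<in> borel_measurable M"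
      using measurable_from_subalg[OF sub measJ[OF that]] .
    then show "(\<lambda>\<omega>. phi (SUP j\<in>J. A j \<omega>)) \<in> borel_measurable M" by measurable
  qed
  have vmono: "v J1 \<le> v J2" if "countable J2" "J2 \<subseteq> I" "J1 \<subseteq> J2" for J1 J2
  proof -
    have "countable J1" using that countable_subset by blast
    then show ?thesis unfolding v_def
      using that by (intro integral_mono intJ) (auto intro!: phi_mono SUP_subset_mono)
  qed
  define S where "S = v ` {J. countable J \<and> J \<subseteq> I}"
  have vb: "v J \<le> pi/2" if "countable J" "J \<subseteq> I" for J
  proof -
    have "v J \<le> (\<integral>\<omega>. pi/2 \<partial>M)" unfolding v_def
      using phi_le by (intro integral_mono intJ that) auto
    then show ?thesis by (simp add: prob_space)
  qed
  have Sne: "S \<noteq> {}" unfolding S_def by auto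
  have Sbdd: "bdd_above S" unfolding S_def bdd_above_def using vb by blast
  define c where "c = Sup S"
  have "\<exists>J. countable J \<and> J \<subseteq> I \<and> c - 1/(Suc n) < v J" for n :: nat
  proof -
    have "c - 1/(Suc n) < Sup S" unfolding c_def by simp
    then obtain s where "s \<in> S" "c - 1/(Suc n) < s" using less_cSupE[OF _ Sne] by blast
    then show ?thesis unfolding S_def by auto
  qed
  then obtain Jn where Jn: "\<And>n. countable (Jn n) \<and> Jn n \<subseteq> I \<and> c - 1/(Suc n) < v (Jn n)" by metis
  define J where "J = (\<Union>n. Jn n)"
  have cJ: "countable J" "J \<subseteq> I" unfolding J_def using Jn by auto
  have vJle: "v J' \<le> c" if "countable J'" "J' \<subseteq> I" for J'
    unfolding c_def using that Sbdd by (intro cSup_upper) (auto simp: S_def)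
  have "c - 1/(Suc n) < v J" for n
  proof -
    have "Jn n \<subseteq> J" unfolding J_def by auto
    then show ?thesis using Jn[of n] vmono[OF cJ, of "Jn n"] by linarith
  qed
  then have cle: "c \<le> v J"
  proof -
    assume H: "\<And>n. c - 1/(Suc n) < v J"
    show ?thesis
    proof (rule field_le_epsilon)
      fix e :: real assume "0 < e"
      then obtain n :: nat where "1 / real (Suc n) < e" using nat_approx_posE by blast
      with H[of n] show "c \<le> v J + e" by linarith
    qed
  qed
  have vJ: "v J = c" using cle vJle[OF cJ] by linarith
  have "AE \<omega> in M. A i \<omega> \<le> (SUP j\<in>J. A j \<omega>)" if i: "i \<in> I" for i
  proof -
    define K where "K = insert i J"
    have cK: "countable K" "K \<subseteq> I" unfolding K_def using cJ i by auto
    have "v K \<le> v J" using vJle[OF cK] vJ by simp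
    moreover have "v J \<le> v K" using vmono[OF cK, of J] unfolding K_def by auto
    ultimately have "v K - v J = 0" by simp
    define f1 where "f1 \<omega> = phi (SUP j\<in>K. A j \<omega>)" for \<omega>
    define f2 where "f2 \<omega> = phi (SUP j\<in>J. A j \<omega>)" for \<omega>
    have i1: "integrable M f1" unfolding f1_def by (rule intJ[OF cK])
    have i2: "integrable M f2" unfolding f2_def by (rule intJ[OF cJ])
    have ge: "f2 \<omega> \<le> f1 \<omega>" for \<omega>
      unfolding f1_def f2_def K_def by (intro phi_mono SUP_subset_mono) auto
    have "(\<integral>\<omega>. f1 \<omega> - f2 \<omega> \<partial>M) = v K - v J"
      unfolding v_def f1_def[symmetric] f2_def[symmetric] using i1 i2 by (rule Bochner_Integration.integral_diff)
    then have "(\<integral>\<omega>. f1 \<omega> - f2 \<omega> \<partial>M) = 0" using \<open>v K - v J = 0\<close> by simp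
    moreover have "integrable M (\<lambda>\<omega>. f1 \<omega> - f2 \<omega>)" using i1 i2 by (rule Bochner_Integration.integrable_diff)
    moreover have "AE \<omega> in M. 0 \<le> f1 \<omega> - f2 \<omega>" using ge by simp
    ultimately have "AE \<omega> in M. f1 \<omega> - f2 \<omega> = 0" using integral_nonneg_eq_0_iff_AE by blast
    then have "AE \<omega> in M. phi (SUP j\<in>K. A j \<omega>) - phi (SUP j\<in>J. A j \<omega>) = 0"
      unfolding f1_def f2_def .
    then show ?thesis
    proof (rule eventually_mono)
      fix \<omega> assume h: "phi (SUP j\<in>K. A j \<omega>) - phi (SUP j\<in>J. A j \<omega>) = 0"
      have le: "(SUP j\<in>J. A j \<omega>) \<le> (SUP j\<in>K. A j \<omega>)" unfolding K_def by (auto intro!: SUP_subset_mono)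
      have "(SUP j\<in>J. A j \<omega>) = (SUP j\<in>K. A j \<omega>)"
      proof (rule ccontr)
        assume "(SUP j\<in>J. A j \<omega>) \<noteq> (SUP j\<in>K. A j \<omega>)"
        with le have "(SUP j\<in>J. A j \<omega>) < (SUP j\<in>K. A j \<omega>)" by simp
        from phi_strict[OF this] h show False by simp
      qed
      moreover have "A i \<omega> \<le> (SUP j\<in>K. A j \<omega>)" unfolding K_def by (auto intro: SUP_upper)
      ultimately show "A i \<omega> \<le> (SUP j\<in>J. A j \<omega>)" by simp
    qed
  qed
  then show ?thesis using cJ by blast
qed
lemma ess_sup_exists:
  fixes A :: "'i \<Rightarrow> 'a \<Rightarrow> ereal"
  assumes P: "prob_space M" and sub: "subalgebra M N"
    and meas: "\<And>i. i\<in>I \<Longrightarrow> A i \<in> borel_measurable N"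
  shows "is_ess_sup M N I A (ess_sup_rv M N I A)"
proof -
  obtain J :: "'i set" where JJ: "countable J \<and> J \<subseteq> I \<and> (\<forall>i\<in>I. AE \<omega> in M. A i \<omega> \<le> (SUP j\<in>J. A j \<omega>))"
    using countable_dominating[OF P sub meas] by (rule exE)
  note J = JJ[THEN conjunct1] JJ[THEN conjunct2, THEN conjunct1] JJ[THEN conjunct2, THEN conjunct2]
  have "is_ess_sup M N I A (\<lambda>\<omega>. SUP j\<in>J. A j \<omega>)"
    unfolding is_ess_sup_def
  proof (intro conjI allI impI)
    show "(\<lambda>\<omega>. SUP j\<in>J. A j \<omega>) \<in> borel_measurable N"
      using J meas by (intro borel_measurable_SUP) auto
    show "\<forall>i\<in>I. AE \<omega> in M. A i \<omega> \<le> (SUP j\<in>J. A j \<omega>)" by (fact J(3))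
    fix Z' assume Z': "Z' \<in> borel_measurable N \<and> (\<forall>i\<in>I. AE \<omega> in M. A i \<omega> \<le> Z' \<omega>)"
    then have "\<forall>j\<in>J. AE \<omega> in M. A j \<omega> \<le> Z' \<omega>" using J by blast
    then have "AE \<omega> in M. \<forall>j\<in>J. A j \<omega> \<le> Z' \<omega>" by (rule AE_ball_countable[OF J(1), THEN iffD2])
    then show "AE \<omega> in M. (SUP j\<in>J. A j \<omega>) \<le> Z' \<omega>"
      by (rule eventually_mono) (simp add: SUP_le_iff)
  qed
  then show ?thesis unfolding ess_sup_rv_def by (rule someI[where P="is_ess_sup M N I A"])
qed

lemma countable_dominating_inf:
  fixes A :: "'i \<Rightarrow> 'a \<Rightarrow> ereal"
  assumes P: "prob_space M" and sub: "subalgebra M N"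
    and meas: "\<And>i. i\<in>I \<Longrightarrow> A i \<in> borel_measurable N"
  shows "\<exists>J::'i set. countable J \<and> J \<subseteq> I \<and> (\<forall>i\<in>I. AE \<omega> in M. (INF j\<in>J. A j \<omega>) \<le> A i \<omega>)"
proof -
  have "\<And>i. i\<in>I \<Longrightarrow> (\<lambda>\<omega>. - A i \<omega>) \<in> borel_measurable N" using meas by simp
  from countable_dominating[OF P sub this] obtain J :: "'i set" where
    JJ: "countable J \<and> J \<subseteq> I \<and> (\<forall>i\<in>I. AE \<omega> in M. - A i \<omega> \<le> (SUP j\<in>J. - A j \<omega>))" by (rule exE)
  note J = JJ[THEN conjunct1] JJ[THEN conjunct2, THEN conjunct1] JJ[THEN conjunct2, THEN conjunct2]
  have "\<forall>i\<in>I. AE \<omega> in M. (INF j\<in>J. A j \<omega>) \<le> A i \<omega>"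
  proof
    fix i assume "i \<in> I"
    with J(3) have "AE \<omega> in M. - A i \<omega> \<le> (SUP j\<in>J. - A j \<omega>)" by blast
    then show "AE \<omega> in M. (INF j\<in>J. A j \<omega>) \<le> A i \<omega>"
      by eventually_elim (simp add: ereal_SUP_uminus_eq ereal_uminus_le_reorder)
  qed
  with J(1,2) show ?thesis by blast
qed

lemma ess_inf_exists:
  fixes A :: "'i \<Rightarrow> 'a \<Rightarrow> ereal"
  assumes P: "prob_space M" and sub: "subalgebra M N"
    and meas: "\<And>i. i\<in>I \<Longrightarrow> A i \<in> borel_measurable N"
  shows "is_ess_inf M N I A (ess_inf_rv M N I A)"
proof -
  obtain J :: "'i set" where JJ: "countable J \<and> J \<subseteq> I \<and> (\<forall>i\<in>I. AE \<omega> in M. (INF j\<in>J. A j \<omega>) \<le> A i \<omega>)"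
    using countable_dominating_inf[OF P sub meas] by (rule exE)
  note J = JJ[THEN conjunct1] JJ[THEN conjunct2, THEN conjunct1] JJ[THEN conjunct2, THEN conjunct2]
  have "is_ess_inf M N I A (\<lambda>\<omega>. INF j\<in>J. A j \<omega>)"
    unfolding is_ess_inf_def
  proof (intro conjI allI impI)
    show "(\<lambda>\<omega>. INF j\<in>J. A j \<omega>) \<in> borel_measurable N"
      using J meas by (intro borel_measurable_INF) auto
    show "\<forall>i\<in>I. AE \<omega> in M. (INF j\<in>J. A j \<omega>) \<le> A i \<omega>" by (fact J(3))
    fix Z' assume Z': "Z' \<in> borel_measurable N \<and> (\<forall>i\<in>I. AE \<omega> in M. Z' \<omega> \<le> A i \<omega>)"
    then have "\<forall>j\<in>J. AE \<omega> in M. Z' \<omega> \<le> A j \<omega>" using J by blast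
    then have "AE \<omega> in M. \<forall>j\<in>J. Z' \<omega> \<le> A j \<omega>" by (rule AE_ball_countable[OF J(1), THEN iffD2])
    then show "AE \<omega> in M. Z' \<omega> \<le> (INF j\<in>J. A j \<omega>)"
      by (rule eventually_mono) (simp add: le_INF_iff)
  qed
  then show ?thesis unfolding ess_inf_rv_def by (rule someI[where P="is_ess_inf M N I A"])
qed



lemma pw:
  fixes \<alpha> \<beta> \<epsilon> K :: real
  assumes "0<\<beta>" "\<beta><\<alpha>" "0<\<epsilon>"
  shows "\<exists>X>0. \<forall>z\<ge>X. \<forall>u\<ge>0. \<beta>/z*(u powr (\<alpha>/ \<beta>) - 1) < K \<longrightarrow> \<alpha>/z*(u-1) \<le> \<epsilon>"
proof -
  define r where "r = \<alpha>/ \<beta>"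
  define K1 where "K1 = max K 1"
  define c where "c = 1 + K1/ \<beta>"
  have r1: "r > 1" unfolding r_def using assms by simp
  have K1: "K1 \<ge> 1" "K \<le> K1" unfolding K1_def by auto
  have c0: "c > 0" unfolding c_def using K1 assms by (simp add: add_pos_nonneg)
  have a0: "\<alpha> > 0" using assms by simp
  define \<delta> where "\<delta> = \<epsilon>/(\<alpha> * c powr (1/r))"
  have d0: "\<delta> > 0" unfolding \<delta>_def using assms a0 c0 by simp
  have "((\<lambda>z. z powr (1/r - 1)) \<longlongrightarrow> 0) at_top"
    by (rule tendsto_neg_powr) (use r1 in \<open>simp_all add: filterlim_ident\<close>)
  then have "\<forall>\<^sub>F z in at_top. z powr (1/r-1) < \<delta>" using order_tendstoD(2) d0 by blast
  then obtain X0 where X0: "\<And>z. z \<ge> X0 \<Longrightarrow> z powr (1/r-1) < \<delta>" by (auto simp: eventually_at_top_linorder)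
  define X where "X = max X0 1"
  have "\<forall>z\<ge>X. \<forall>u\<ge>0. \<beta>/z*(u powr r - 1) < K \<longrightarrow> \<alpha>/z*(u-1) \<le> \<epsilon>"
  proof (intro allI impI)
    fix z u :: real assume sX: "z \<ge> X" and u0: "u \<ge> 0" and h: "\<beta>/z*(u powr r - 1) < K"
    have s1: "z \<ge> 1" and sX0: "z \<ge> X0" using sX unfolding X_def by auto
    have s0: "z > 0" using s1 by simp
    have "u powr r - 1 < K*z/ \<beta>" using h s0 assms(1) by (simp add: field_simps)
    moreover have "K*z/ \<beta> \<le> K1*z/ \<beta>" using K1 s0 assms(1) by (intro divide_right_mono mult_right_mono) auto
    moreover have "1 + K1*z/ \<beta> \<le> z*c" unfolding c_def using s1 by (simp add: field_simps)
    ultimately have ur: "u powr r < z*c" by linarith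
    have uu: "u < (z*c) powr (1/r)"
    proof (cases "u = 0")
      case True then show ?thesis using s0 c0 by simp
    next
      case False
      have "u = (u powr r) powr (1/r)" using False u0 r1 by (simp add: powr_powr)
      also have "... < (z*c) powr (1/r)" using ur r1 by (intro powr_less_mono2) auto
      finally show ?thesis .
    qed
    have "\<alpha>/z*(u-1) \<le> \<alpha>/z * (z*c) powr (1/r)"
      using uu a0 s0 by (intro mult_left_mono) auto
    also have "... = \<alpha> * c powr (1/r) * z powr (1/r - 1)"
      using s0 c0 by (simp add: powr_mult powr_diff)
    also have "... \<le> \<alpha> * c powr (1/r) * \<delta>"
      using X0[OF sX0] a0 c0 by (intro mult_left_mono) auto
    also have "... = \<epsilon>" unfolding \<delta>_def using a0 c0 by simp
    finally show "\<alpha>/z*(u-1) \<le> \<epsilon>" .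
  qed
  moreover have "X > 0" unfolding X_def by simp
  ultimately show ?thesis unfolding r_def by blast
qed



lemma ereal_lt_nat: "(z::ereal) < \<infinity> \<Longrightarrow> \<exists>n::nat. z < ereal (real n)"
proof (cases z)
  case (real r)
  obtain n :: nat where "r < real n" using reals_Archimedean2 by blast
  then show ?thesis using real by auto
next
  case PInf
  assume "z < \<infinity>" with PInf show ?thesis by simp
next
  case MInf
  then show ?thesis by auto
qed

lemma main_abstract:
  fixes M N :: "'a measure" and La Lb :: "real \<Rightarrow> 'a \<Rightarrow> ereal" and u :: "real \<Rightarrow> 'a \<Rightarrow> real"
    and \<alpha> \<beta> t :: real
  assumes P: "prob_space M" and sub: "subalgebra M N"
    and measA: "\<And>y. t < y \<Longrightarrow> La y \<in> borel_measurable N"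
    and measB: "\<And>y. t < y \<Longrightarrow> Lb y \<in> borel_measurable N"
    and rel: "\<And>y. t < y \<Longrightarrow> AE \<omega> in M. 0 \<le> u y \<omega> \<and> La y \<omega> = ereal (\<alpha>/(y-t)*(u y \<omega> - 1))
                 \<and> Lb y \<omega> = ereal (\<beta>/(y-t)*(u y \<omega> powr (\<alpha>/\<beta>) - 1))"
    and ab: "0 < \<beta>" "\<beta> < \<alpha>"
  shows "((AE \<omega> in M. ess_limsup M N {t<..} La \<omega> > 0) \<longrightarrow> (AE \<omega> in M. ess_limsup M N {t<..} Lb \<omega> = \<infinity>))
       \<and> ((AE \<omega> in M. ess_limsup M N {t<..} Lb \<omega> < \<infinity>) \<longrightarrow> (AE \<omega> in M. ess_limsup M N {t<..} La \<omega> = 0))"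
proof -
  interpret prob_space M by fact
  define I where "I = {t<..}"
  define S where "S x = {y\<in>I. x \<le> y}" for x
  define U where "U x = ess_sup_rv M N (S x) La" for x
  define V where "V x = ess_sup_rv M N (S x) Lb" for x
  define Wa where "Wa = ess_inf_rv M N I U"
  define Wb where "Wb = ess_inf_rv M N I V"
  have WaE: "ess_limsup M N {t<..} La = Wa" unfolding Wa_def ess_limsup_def U_def S_def I_def ..
  have WbE: "ess_limsup M N {t<..} Lb = Wb" unfolding Wb_def ess_limsup_def V_def S_def I_def ..
  have hU: "is_ess_sup M N (S x) La (U x)" for x
    unfolding U_def by (rule ess_sup_exists[OF P sub measA]) (auto simp: S_def I_def)
  have hV: "is_ess_sup M N (S x) Lb (V x)" for x
    unfolding V_def by (rule ess_sup_exists[OF P sub measB]) (auto simp: S_def I_def)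
  have Um[measurable]: "U x \<in> borel_measurable N" for x using hU[of x] unfolding is_ess_sup_def by blast
  have Vm[measurable]: "V x \<in> borel_measurable N" for x using hV[of x] unfolding is_ess_sup_def by blast
  have hWa: "is_ess_inf M N I U Wa" unfolding Wa_def by (rule ess_inf_exists[OF P sub Um])
  have hWb: "is_ess_inf M N I V Wb" unfolding Wb_def by (rule ess_inf_exists[OF P sub Vm])
  have Wam[measurable]: "Wa \<in> borel_measurable N" using hWa unfolding is_ess_inf_def by blast
  have key: "AE \<omega> in M. V x \<omega> < ereal K \<longrightarrow> Wa \<omega> \<le> 0" if x: "t < x" for x K
  proof -
    have eps: "AE \<omega> in M. V x \<omega> < ereal K \<longrightarrow> Wa \<omega> \<le> ereal \<epsilon>" if e: "0 < \<epsilon>" for \<epsilon>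
    proof -
      obtain X where X: "X > 0" "\<And>z u. z \<ge> X \<Longrightarrow> u \<ge> 0 \<Longrightarrow> \<beta>/z*(u powr (\<alpha>/\<beta>) - 1) < K \<Longrightarrow> \<alpha>/z*(u-1) \<le> \<epsilon>"
        using pw[OF ab e, of K] by blast
      define x' where "x' = max x (t + X)"
      have x't: "t < x'" and xx': "x \<le> x'" using x unfolding x'_def by auto
      define Z where "Z \<omega> = (if V x \<omega> < ereal K then ereal \<epsilon> else U x' \<omega>)" for \<omega>
      have Zm: "Z \<in> borel_measurable N" unfolding Z_def by measurable
      have "\<forall>y\<in>S x'. AE \<omega> in M. La y \<omega> \<le> Z \<omega>"
      proof
        fix y assume y: "y \<in> S x'"
        then have yt: "t < y" and yx: "x \<le> y" and yx': "x' \<le> y" using xx' unfolding S_def I_def by auto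
        have yS: "y \<in> S x" using y xx' unfolding S_def by auto
        have a1: "AE \<omega> in M. La y \<omega> \<le> U x' \<omega>" using hU[of x'] y unfolding is_ess_sup_def by blast
        have a2: "AE \<omega> in M. Lb y \<omega> \<le> V x \<omega>" using hV[of x] yS unfolding is_ess_sup_def by blast
        have zX: "y - t \<ge> X" using yx' unfolding x'_def by auto
        from a1 a2 rel[OF yt] show "AE \<omega> in M. La y \<omega> \<le> Z \<omega>"
        proof eventually_elim
          case (elim \<omega>)
          show ?case
          proof (cases "V x \<omega> < ereal K")
            case True
            have "Lb y \<omega> < ereal K" using elim True by (meson order_le_less_trans)
            then have "ereal (\<beta>/(y-t)*(u y \<omega> powr (\<alpha>/\<beta>) - 1)) < ereal K" using elim by simp
            then have "\<beta>/(y-t)*(u y \<omega> powr (\<alpha>/\<beta>) - 1) < K" by simp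
            then have "\<alpha>/(y-t)*(u y \<omega> - 1) \<le> \<epsilon>" using X(2)[OF zX] elim by blast
            then show ?thesis using True elim unfolding Z_def by simp
          next
            case False
            then show ?thesis using elim unfolding Z_def by simp
          qed
        qed
      qed
      then have b1: "AE \<omega> in M. U x' \<omega> \<le> Z \<omega>" using hU[of x'] Zm unfolding is_ess_sup_def by blast
      have b2: "AE \<omega> in M. Wa \<omega> \<le> U x' \<omega>" using hWa x't unfolding is_ess_inf_def I_def by blast
      from b1 b2 show ?thesis
        by eventually_elim (auto simp: Z_def)
    qed
    have "\<forall>n::nat. AE \<omega> in M. V x \<omega> < ereal K \<longrightarrow> Wa \<omega> \<le> ereal (1 / real (Suc n))"
      using eps by simp
    then have "AE \<omega> in M. \<forall>n::nat. V x \<omega> < ereal K \<longrightarrow> Wa \<omega> \<le> ereal (1 / real (Suc n))"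
      by (rule AE_all_countable[THEN iffD2])
    then show ?thesis
    proof (rule eventually_mono, intro impI)
      fix \<omega> assume h: "\<forall>n::nat. V x \<omega> < ereal K \<longrightarrow> Wa \<omega> \<le> ereal (1 / real (Suc n))"
        and v: "V x \<omega> < ereal K"
      show "Wa \<omega> \<le> 0"
      proof (rule ereal_le_epsilon2)
        fix e :: real assume "0 < e"
        then obtain n :: nat where "1 / real (Suc n) < e" using nat_approx_posE by blast
        then have "Wa \<omega> \<le> ereal e" using h v by (meson ereal_less_eq(3) less_imp_le order_trans)
        then show "Wa \<omega> \<le> 0 + ereal e" by simp
      qed
    qed
  qed
  have Upos: "AE \<omega> in M. 0 \<le> U x \<omega>" if x: "t < x" for x
  proof -
    have "\<forall>n::nat. AE \<omega> in M. ereal (- \<alpha>/(x + real n - t)) \<le> U x \<omega>"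
    proof
      fix n :: nat
      define y where "y = x + real n"
      have yt: "t < y" using x unfolding y_def by simp
      have yS: "y \<in> S x" unfolding S_def I_def y_def using x by auto
      have a1: "AE \<omega> in M. La y \<omega> \<le> U x \<omega>" using hU[of x] yS unfolding is_ess_sup_def by blast
      from a1 rel[OF yt] show "AE \<omega> in M. ereal (- \<alpha>/(x + real n - t)) \<le> U x \<omega>"
      proof eventually_elim
        case (elim \<omega>)
        have "- \<alpha>/(y - t) \<le> \<alpha>/(y-t)*(u y \<omega> - 1)"
          using elim yt ab by (simp add: field_simps)
        then have "ereal (- \<alpha>/(y - t)) \<le> La y \<omega>" using elim by simp
        then show ?case using elim unfolding y_def by (meson order_trans)
      qed
    qed
    then have "AE \<omega> in M. \<forall>n::nat. ereal (- \<alpha>/(x + real n - t)) \<le> U x \<omega>"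
      by (rule AE_all_countable[THEN iffD2])
    then show ?thesis
    proof (rule eventually_mono)
      fix \<omega> assume h: "\<forall>n::nat. ereal (- \<alpha>/(x + real n - t)) \<le> U x \<omega>"
      show "0 \<le> U x \<omega>"
      proof (rule ereal_le_epsilon2)
        fix e :: real assume e: "0 < e"
        obtain n :: nat where n: "\<alpha>/e < real n" using reals_Archimedean2 by blast
        have "\<alpha> / (x + real n - t) \<le> e"
        proof -
          have pos: "0 < x + real n - t" using x by simp
          have "\<alpha> < e * real n" using n e by (simp add: field_simps)
          also have "... \<le> e * (x + real n - t)" using x e by simp
          finally show ?thesis using pos by (simp add: field_simps)
        qed
        then have "ereal (-e) \<le> ereal (- \<alpha>/(x + real n - t))" by simp
        also have "... \<le> U x \<omega>" using h by blast
        finally have "ereal (-e) \<le> U x \<omega>" .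
        then show "0 \<le> U x \<omega> + ereal e"
          by (cases "U x \<omega>") auto
      qed
    qed
  qed
  have Wapos: "AE \<omega> in M. 0 \<le> Wa \<omega>"
  proof -
    have "(\<lambda>_. 0::ereal) \<in> borel_measurable N" by simp
    moreover have "\<forall>i\<in>I. AE \<omega> in M. 0 \<le> U i \<omega>" using Upos unfolding I_def by auto
    ultimately show ?thesis using hWa unfolding is_ess_inf_def by blast
  qed
  show ?thesis
    unfolding WaE WbE
  proof (intro conjI impI)
    assume A: "AE \<omega> in M. 0 < Wa \<omega>"
    have "\<forall>i\<in>I. AE \<omega> in M. \<infinity> \<le> V i \<omega>"
    proof
      fix x assume "x \<in> I"
      then have x: "t < x" unfolding I_def by simp
      have "AE \<omega> in M. \<forall>n::nat. V x \<omega> < ereal (real n) \<longrightarrow> Wa \<omega> \<le> 0"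
        using key[OF x] by (intro AE_all_countable[THEN iffD2]) blast
      with A show "AE \<omega> in M. \<infinity> \<le> V x \<omega>"
      proof eventually_elim
        case (elim \<omega>)
        show ?case
        proof (rule ccontr)
          assume "\<not> \<infinity> \<le> V x \<omega>"
          then have "V x \<omega> < \<infinity>" by simp
          then obtain n :: nat where "V x \<omega> < ereal (real n)" using ereal_lt_nat by blast
          then show False using elim by force
        qed
      qed
    qed
    moreover have "(\<lambda>_. \<infinity>::ereal) \<in> borel_measurable N" by simp
    ultimately have "AE \<omega> in M. \<infinity> \<le> Wb \<omega>" using hWb unfolding is_ess_inf_def by blast
    then show "AE \<omega> in M. Wb \<omega> = \<infinity>" by eventually_elim simp
  next
    assume B: "AE \<omega> in M. Wb \<omega> < \<infinity>"
    obtain J :: "real set" where JJ: "countable J \<and> J \<subseteq> I \<and> (\<forall>i\<in>I. AE \<omega> in M. (INF j\<in>J. V j \<omega>) \<le> V i \<omega>)"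
      using countable_dominating_inf[OF P sub Vm] by (rule exE)
    note J = JJ[THEN conjunct1] JJ[THEN conjunct2, THEN conjunct1] JJ[THEN conjunct2, THEN conjunct2]
    have "(\<lambda>\<omega>. INF j\<in>J. V j \<omega>) \<in> borel_measurable N"
      using J(1) by (intro borel_measurable_INF) auto
    then have C: "AE \<omega> in M. (INF j\<in>J. V j \<omega>) \<le> Wb \<omega>" using hWb J(3) unfolding is_ess_inf_def by blast
    have "\<forall>j\<in>J. AE \<omega> in M. \<forall>n::nat. V j \<omega> < ereal (real n) \<longrightarrow> Wa \<omega> \<le> 0"
    proof
      fix j assume "j \<in> J"
      then have "t < j" using J(2) unfolding I_def by auto
      from key[OF this] show "AE \<omega> in M. \<forall>n::nat. V j \<omega> < ereal (real n) \<longrightarrow> Wa \<omega> \<le> 0"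
        by (intro AE_all_countable[THEN iffD2]) blast
    qed
    then have D: "AE \<omega> in M. \<forall>j\<in>J. \<forall>n::nat. V j \<omega> < ereal (real n) \<longrightarrow> Wa \<omega> \<le> 0"
      by (rule AE_ball_countable[OF J(1), THEN iffD2])
    from B C D Wapos show "AE \<omega> in M. Wa \<omega> = 0"
    proof eventually_elim
      case (elim \<omega>)
      then have "(INF j\<in>J. V j \<omega>) < \<infinity>" by (meson order_le_less_trans)
      then have "\<exists>j\<in>J. V j \<omega> < \<infinity>" by (simp only: INF_less_iff)
      then obtain j where j: "j \<in> J" "V j \<omega> < \<infinity>" by blast
      then obtain n :: nat where "V j \<omega> < ereal (real n)" using ereal_lt_nat by blast
      then have "Wa \<omega> \<le> 0" using elim j by blast
      then show ?case using elim by simp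
    qed
  qed
qed



theorem proposition4:
  fixes M :: "'a measure" and F :: "real \<Rightarrow> 'a measure" and \<pi> :: "real \<Rightarrow> 'a \<Rightarrow> real"
    and \<alpha> \<beta> t :: real
  assumes "prob_space M"
    and "filtration_usual M F"
    and "pricing_kernel M F \<pi>"
    and "0 < \<beta>" and "\<beta> < \<alpha>" and "0 \<le> t"
  shows "((AE \<omega> in M. long_tail_pareto_rate M F \<pi> \<alpha> t \<omega> > 0) \<longrightarrow>
            (AE \<omega> in M. long_tail_pareto_rate M F \<pi> \<beta> t \<omega> = \<infinity>))
       \<and> ((AE \<omega> in M. long_tail_pareto_rate M F \<pi> \<beta> t \<omega> < \<infinity>) \<longrightarrow>
            (AE \<omega> in M. long_tail_pareto_rate M F \<pi> \<alpha> t \<omega> = 0))"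
proof -
  note P = assms(1)
  interpret prob_space M by fact
  have sub: "subalgebra M (F t)" using assms(2,6) unfolding filtration_usual_def by blast
  have fms: "finite_measure_subalgebra M (F t)"
    unfolding finite_measure_subalgebra_def finite_measure_subalgebra_axioms_def
    using sub finite_measure_axioms by blast
  have sfs: "sigma_finite_subalgebra M (F t)" by (rule finite_measure_subalgebra_is_sigma_finite[OF fms])
  have pim: "\<pi> s \<in> borel_measurable (F s)" if "0 \<le> s" for s
    using assms(3) that unfolding pricing_kernel_def by blast
  have pipos: "AE \<omega> in M. \<pi> s \<omega> > 0" if "0 \<le> s" for s
    using assms(3) that unfolding pricing_kernel_def by blast
  have piint: "integrable M (\<pi> s)" if "0 \<le> s" for s
    using assms(3) that unfolding pricing_kernel_def by blast
  have pit[measurable]: "\<pi> t \<in> borel_measurable (F t)" using pim assms(6) by blast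
  have ce[measurable]: "real_cond_exp M (F t) f \<in> borel_measurable (F t)" for f
    using borel_measurable_cond_exp .
  have meas: "tail_pareto_rate M F \<pi> lam t y \<in> borel_measurable (F t)" for lam y
    unfolding tail_pareto_rate_def bond_price_def by measurable
  have bpos: "AE \<omega> in M. 0 \<le> bond_price M F \<pi> t y \<omega>" if y: "t < y" for y
  proof -
    have y0: "0 \<le> y" using y assms(6) by simp
    have "AE \<omega> in M. 0 \<le> \<pi> y \<omega>" using pipos[OF y0] by eventually_elim simp
    moreover have "\<pi> y \<in> borel_measurable M" using piint[OF y0] by (rule borel_measurable_integrable)
    ultimately have "AE \<omega> in M. 0 \<le> real_cond_exp M (F t) (\<pi> y) \<omega>"
      by (rule sigma_finite_subalgebra.real_cond_exp_pos[OF sfs])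
    with pipos[OF assms(6)] show ?thesis
      unfolding bond_price_def by eventually_elim simp
  qed
  define u where "u y \<omega> = bond_price M F \<pi> t y \<omega> powr (-1/\<alpha>)" for y \<omega>
  have a0: "\<alpha> \<noteq> 0" "\<beta> \<noteq> 0" using assms(4,5) by auto
  have rel: "AE \<omega> in M. 0 \<le> u y \<omega> \<and> tail_pareto_rate M F \<pi> \<alpha> t y \<omega> = ereal (\<alpha>/(y-t)*(u y \<omega> - 1))
                 \<and> tail_pareto_rate M F \<pi> \<beta> t y \<omega> = ereal (\<beta>/(y-t)*(u y \<omega> powr (\<alpha>/\<beta>) - 1))"
    if y: "t < y" for y
    using bpos[OF y]
  proof eventually_elim
    case (elim \<omega>)
    define p where "p = bond_price M F \<pi> t y \<omega>"
    have "p powr (-1/\<beta>) = (p powr (-1/\<alpha>)) powr (\<alpha>/\<beta>)"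
    proof (cases "p = 0")
      case True then show ?thesis by simp
    next
      case False
      have "-1/\<alpha> * (\<alpha>/\<beta>) = -1/\<beta>" using a0 by (simp add: field_simps)
      moreover have "(p powr (-1/\<alpha>)) powr (\<alpha>/\<beta>) = p powr (-1/\<alpha> * (\<alpha>/\<beta>))" by (rule powr_powr)
      ultimately show ?thesis using a0 by simp
    qed
    then show ?case unfolding u_def tail_pareto_rate_def p_def by simp
  qed
  have "((AE \<omega> in M. ess_limsup M (F t) {t<..} (\<lambda>T. tail_pareto_rate M F \<pi> \<alpha> t T) \<omega> > 0) \<longrightarrow>
          (AE \<omega> in M. ess_limsup M (F t) {t<..} (\<lambda>T. tail_pareto_rate M F \<pi> \<beta> t T) \<omega> = \<infinity>))
       \<and> ((AE \<omega> in M. ess_limsup M (F t) {t<..} (\<lambda>T. tail_pareto_rate M F \<pi> \<beta> t T) \<omega> < \<infinity>) \<longrightarrow>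
          (AE \<omega> in M. ess_limsup M (F t) {t<..} (\<lambda>T. tail_pareto_rate M F \<pi> \<alpha> t T) \<omega> = 0))"
    by (rule main_abstract[OF P sub meas meas rel assms(4,5)])
  then show ?thesis unfolding long_tail_pareto_rate_def .
qed

end
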